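(* Let $T$ be a linear operator bounded on $L^2(\mathbb R^n)$ with kernel $K$ (locally integrable on $\mathbb R^{2n}$ off the diagonal) such that $Tg(x)=\int K(x,y)g(y)\,dy$ for $x$ outside the support of a compactly supported $g\in L^2$, and such that: (a) for some $\mu>0$, $|K(x,y)|\le C\min\{|x-y|^{-n},|x-y|^{-n-\mu}\}$ for $x\neq y$; (b) for some $\delta>0$ and all $0<r<1$, $j\in\mathbb N$, $z\in\mathbb R^n$ and $|y-z|<r$, $$\int_{A_j(z,r)}\big(|K(x,y)-K(x,z)|+|K(y,x)-K(z,x)|\big)dx\lesssim 2^{-j\delta},$$ where $A_j(z,r)=\{x:2^jr\le|x-z|<2^{j+1}r\}$. Then for every compactly supported $g\in L^2(\mathbb R^n)$ with $\int g=0$ and every multi-index $\alpha$ with $|\alpha|<\min\{\mu,\delta\}$, the function $x\mapsto x^\alpha Tg(x)$ belongs to $L^1(\mathbb R^n)$. *)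

theory Defs
  imports "HOL-Analysis.Analysis"
begin

definition L2 :: "(real^'n \<Rightarrow> complex) set" where
  "L2 = {f. f \<in> borel_measurable lebesgue \<and> integrable lebesgue (\<lambda>x. (norm (f x))^2)}"

definition L2_norm_sq :: "(real^'n \<Rightarrow> complex) \<Rightarrow> real" where
  "L2_norm_sq f = (LINT x|lebesgue. (norm (f x))^2)"

definition supp :: "(real^'n \<Rightarrow> complex) \<Rightarrow> (real^'n) set" where
  "supp f = closure {x. f x \<noteq> 0}"

definition mi_order :: "('n::finite \<Rightarrow> nat) \<Rightarrow> nat" where
  "mi_order \<alpha> = (\<Sum>i\<in>UNIV. \<alpha> i)"

definition monomial :: "real^'n \<Rightarrow> ('n \<Rightarrow> nat) \<Rightarrow> real" where
  "monomial x \<alpha> = (\<Prod>i\<in>UNIV. (x $ i) ^ (\<alpha> i))"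

definition annulus :: "nat \<Rightarrow> real^'n \<Rightarrow> real \<Rightarrow> (real^'n) set" where
  "annulus j z r = {x. 2^j * r \<le> dist x z \<and> dist x z < 2^(j+1) * r}"

end

theory Submission
  imports Defs
begin

lemma dyadic_exists:
  fixes t :: real assumes "t \<ge> 1"
  shows "\<exists>k::nat. 2^k \<le> t \<and> t < 2^(Suc k)"
proof -
  define k where "k = nat \<lfloor>log 2 t\<rfloor>"
  have l0: "log 2 t \<ge> 0" using assms by simp
  have rk: "real k = of_int \<lfloor>log 2 t\<rfloor>" using l0 by (simp add: k_def)
  have "(2::real)^k = 2 powr (real k)" by (simp add: powr_realpow)
  also have "2 powr (real k) \<le> 2 powr (log 2 t)" unfolding rk by (intro powr_mono) auto
  also have "\<dots> = t" using assms by simp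
  finally have a: "2^k \<le> t" .
  have "t = 2 powr (log 2 t)" using assms by simp
  also have "\<dots> < 2 powr (real k + 1)" unfolding rk
    by (intro powr_less_mono) (use real_of_int_floor_add_one_gt[of "log 2 t"] in auto)
  also have "\<dots> = 2^(Suc k)" by (simp add: powr_realpow[symmetric] powr_add)
  finally show ?thesis using a by blast
qed

lemma lebesgueI_borel: "f \<in> borel_measurable borel \<Longrightarrow> f \<in> borel_measurable lebesgue"
  by (rule measurable_completion) (simp add: measurable_cong_sets[OF sets_lborel refl])

lemma tail_integrable:
  fixes s \<rho> :: real
  assumes s: "s > real DIM('a)" and rho: "\<rho> \<ge> 1"
  shows "integrable lebesgue (\<lambda>x::'a::euclidean_space. indicator {x. \<rho> \<le> norm x} x * norm x powr (-s))"
proof (rule integrableI_nonneg)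
  define f where "f = (\<lambda>x::'a. indicator {x. \<rho> \<le> norm x} x * norm x powr (-s))"
  define d where "d = DIM('a)"
  show "(\<lambda>x::'a. indicator {x. \<rho> \<le> norm x} x * norm x powr (-s)) \<in> borel_measurable lebesgue"
    by (rule lebesgueI_borel) measurable
  show "AE x in lebesgue. 0 \<le> indicator {x. \<rho> \<le> norm x} x * norm x powr (-s)"
    by (auto simp: indicator_def)
  define V where "V = measure lebesgue (ball (0::'a) 1)"
  have V0: "V \<ge> 0" by (simp add: V_def)
  define S where "S = (\<lambda>k::nat. {x::'a. 2^k \<le> norm x \<and> norm x < 2^Suc k})"
  define c where "c = (\<lambda>k::nat. ((2::real)^k) powr (-s))"
  have Smeas: "S k \<in> sets lebesgue" for k
  proof -
    have "S k \<in> sets borel" unfolding S_def by measurable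
    then show ?thesis by simp
  qed
  have Sle: "emeasure lebesgue (S k) \<le> ennreal ((2^Suc k)^d * V)" for k
  proof -
    have "emeasure lebesgue (S k) \<le> emeasure lebesgue (ball (0::'a) (2^Suc k))"
      by (rule emeasure_mono) (auto simp: S_def)
    also have "\<dots> = ennreal ((2^Suc k)^d) * emeasure lebesgue (ball (0::'a) 1)"
      unfolding d_def by (rule emeasure_lebesgue_ball_conv_unit_ball) simp
    also have "emeasure lebesgue (ball (0::'a) 1) = ennreal V"
      unfolding V_def by (rule emeasure_eq_measure2) simp
    finally show ?thesis by (simp add: ennreal_mult V0)
  qed
  have pw: "ennreal (f x) \<le> (\<Sum>k. ennreal (c k) * indicator (S k) x)" for x
  proof (cases "\<rho> \<le> norm x")
    case False then show ?thesis by (simp add: f_def)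
  next
    case True
    then have x1: "norm x \<ge> 1" using rho by simp
    obtain k where k: "2^k \<le> norm x" "norm x < 2^Suc k" using dyadic_exists[OF x1] by blast
    have "f x = norm x powr (-s)" using True by (simp add: f_def)
    also have "\<dots> \<le> c k" unfolding c_def
      by (rule powr_mono2') (use s k in auto)
    finally have "ennreal (f x) \<le> ennreal (c k) * indicator (S k) x"
      using k by (simp add: S_def ennreal_leI)
    also have "\<dots> = (\<Sum>j\<in>{k}. ennreal (c j) * indicator (S j) x)" by (simp only: sum.insert finite.emptyI empty_iff not_False_eq_True sum.empty add_0_right)
    also have "\<dots> \<le> (\<Sum>j. ennreal (c j) * indicator (S j) x)"
      by (rule sum_le_suminf) auto
    finally show ?thesis .
  qed
  define q where "q = (2::real) powr (real d - s)"
  have q: "0 \<le> q" "q < 1" using s powr_less_mono[of "real d - s" 0 2] by (auto simp: q_def d_def)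
  have termk: "c k * ((2^Suc k)^d * V) = (2^d * V) * q^k" for k
  proof -
    have "c k = 2 powr (- s * k)" unfolding c_def
      by (simp add: powr_realpow[symmetric] powr_powr mult.commute)
    moreover have "((2::real)^Suc k)^d = 2 powr (real d * k) * 2^d"
      by (simp add: powr_realpow[symmetric] powr_powr powr_add power_mult[symmetric] algebra_simps)
    moreover have "q^k = 2 powr ((real d - s) * k)"
      unfolding q_def by (simp add: powr_realpow[symmetric] powr_powr)
    ultimately have e1: "c k = 1 / 2 powr (s * k)" and e2: "((2::real)^Suc k)^d = 2 powr (real d * k) * 2^d"
      and e3: "q^k = 2 powr (real d * k) / 2 powr (s * k)"
      by (simp_all add: right_diff_distrib powr_diff mult.commute powr_minus_divide)
    show ?thesis unfolding e1 e2 e3 by simp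
  qed
  have "(\<integral>\<^sup>+x. ennreal (f x) \<partial>lebesgue) \<le> (\<integral>\<^sup>+x. (\<Sum>k. ennreal (c k) * indicator (S k) x) \<partial>lebesgue)"
    by (rule nn_integral_mono) (rule pw)
  also have "\<dots> = (\<Sum>k. \<integral>\<^sup>+x. ennreal (c k) * indicator (S k) x \<partial>lebesgue)"
    by (rule nn_integral_suminf) (use Smeas in measurable)
  also have "\<dots> = (\<Sum>k. ennreal (c k) * emeasure lebesgue (S k))"
    using Smeas by (simp add: nn_integral_cmult_indicator)
  also have "\<dots> \<le> (\<Sum>k. ennreal ((2^d * V) * q^k))"
  proof (rule suminf_le)
    fix k
    have "ennreal (c k) * emeasure lebesgue (S k) \<le> ennreal (c k) * ennreal ((2^Suc k)^d * V)"
      by (rule mult_left_mono[OF Sle]) simp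
    also have "\<dots> = ennreal (c k * ((2^Suc k)^d * V))"
      by (rule ennreal_mult[symmetric]) (auto simp: c_def V0)
    also have "\<dots> = ennreal ((2^d * V) * q^k)"
      by (simp only: termk)
    finally show "ennreal (c k) * emeasure lebesgue (S k) \<le> ennreal ((2^d * V) * q^k)" .
  qed auto
  also have "\<dots> = ennreal (\<Sum>k. (2^d * V) * q^k)"
    by (rule suminf_ennreal2) (use q V0 in \<open>auto intro!: summable_mult summable_geometric\<close>)
  also have "\<dots> < \<infinity>" by simp
  finally show "(\<integral>\<^sup>+(x::'a). ennreal (indicator {x. \<rho> \<le> norm x} x * norm x powr (-s)) \<partial>lebesgue) < \<infinity>"
    by (simp add: f_def)
qed


lemma L2_local:
  fixes f :: "'a::euclidean_space \<Rightarrow> complex"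
  assumes fm: "f \<in> borel_measurable lebesgue" and f2: "integrable lebesgue (\<lambda>x. (norm (f x))^2)"
    and S: "S \<in> sets lebesgue" "emeasure lebesgue S < \<infinity>"
  shows "integrable lebesgue (\<lambda>x. indicator S x * norm (f x))"
proof (rule Bochner_Integration.integrable_bound)
  show "integrable lebesgue (\<lambda>x. indicator S x + (norm (f x))^2)"
    using S f2 by (intro Bochner_Integration.integrable_add integrable_real_indicator) auto
  show "(\<lambda>x. indicator S x * norm (f x)) \<in> borel_measurable lebesgue"
    using fm S by measurable
  show "AE x in lebesgue. norm (indicator S x * norm (f x)) \<le> norm (indicator S x + (norm (f x))^2)"
  proof (rule AE_I2)
    fix x
    have h: "0 \<le> (norm (f x) - 1)^2" by simp
    have "norm (f x) \<le> 1 + (norm (f x))^2"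
      using h norm_ge_zero[of "f x"] unfolding power2_eq_square by (simp add: algebra_simps, linarith)
    then show "norm (indicator S x * norm (f x)) \<le> norm (indicator S x + (norm (f x))^2)"
      by (auto simp: indicator_def)
  qed
qed

lemma monomial_bound:
  fixes x :: "real^'n"
  shows "\<bar>monomial x \<alpha>\<bar> \<le> norm x ^ mi_order \<alpha>"
proof -
  have "\<bar>monomial x \<alpha>\<bar> = (\<Prod>i\<in>UNIV. \<bar>x $ i\<bar> ^ \<alpha> i)"
    by (simp add: monomial_def abs_prod power_abs)
  also have "\<dots> \<le> (\<Prod>i\<in>UNIV. norm x ^ \<alpha> i)"
    by (intro prod_mono conjI power_mono component_le_norm_cart) auto
  also have "\<dots> = norm x ^ mi_order \<alpha>"
    by (simp add: mi_order_def power_sum)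
  finally show ?thesis .
qed

lemma monomial_meas: "(\<lambda>x::real^'n. monomial x \<alpha>) \<in> borel_measurable lebesgue"
  unfolding monomial_def by (rule lebesgueI_borel) measurable

theorem proposition5p2:
  fixes T :: "(real^'n \<Rightarrow> complex) \<Rightarrow> (real^'n \<Rightarrow> complex)"
    and K :: "real^'n \<Rightarrow> real^'n \<Rightarrow> complex"
    and \<mu> \<delta> :: real
  assumes lin_add: "\<And>f g. f \<in> L2 \<Longrightarrow> g \<in> L2 \<Longrightarrow>
             AE x in lebesgue. T (\<lambda>y. f y + g y) x = T f x + T g x"
    and lin_scale: "\<And>f c. f \<in> L2 \<Longrightarrow> AE x in lebesgue. T (\<lambda>y. c * f y) x = c * T f x"
    and bounded: "\<exists>C. \<forall>f\<in>L2. T f \<in> L2 \<and> L2_norm_sq (T f) \<le> C * L2_norm_sq f"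
    and K_loc_int: "\<And>S. compact S \<Longrightarrow> S \<subseteq> {p. fst p \<noteq> snd p} \<Longrightarrow>
             set_integrable lebesgue S (\<lambda>p. K (fst p) (snd p))"
    and K_repr: "\<And>g. g \<in> L2 \<Longrightarrow> compact (supp g) \<Longrightarrow>
             AE x in lebesgue. x \<notin> supp g \<longrightarrow> T g x = (LINT y|lebesgue. K x y * g y)"
    and mu_pos: "\<mu> > 0"
    and size: "\<exists>C. \<forall>x y. x \<noteq> y \<longrightarrow>
             norm (K x y) \<le> C * min (dist x y powr (- real CARD('n)))
                                     (dist x y powr (- real CARD('n) - \<mu>))"
    and delta_pos: "\<delta> > 0"
    and smooth: "\<exists>C. \<forall>r j z y. 0 < r \<longrightarrow> r < 1 \<longrightarrow> j \<ge> 1 \<longrightarrow> dist y z < r \<longrightarrow>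
             (\<integral>\<^sup>+ x \<in> annulus j z r. ennreal (norm (K x y - K x z) + norm (K y x - K z x)) \<partial>lebesgue)
               \<le> ennreal (C * 2 powr (- real j * \<delta>))"
  shows "\<forall>g \<alpha>. g \<in> L2 \<and> compact (supp g) \<and> (LINT y|lebesgue. g y) = 0
             \<and> real (mi_order \<alpha>) < min \<mu> \<delta>
           \<longrightarrow> integrable lebesgue (\<lambda>x. complex_of_real (monomial x \<alpha>) * T g x)"
proof (intro allI impI, elim conjE)
  fix g :: "real^'n \<Rightarrow> complex" and \<alpha> :: "'n \<Rightarrow> nat"
  assume gL2: "g \<in> L2" and gc: "compact (supp g)" and g0: "(LINT y|lebesgue. g y) = 0"
    and ord: "real (mi_order \<alpha>) < min \<mu> \<delta>"
  define n where "n = real CARD('n)"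
  define a where "a = mi_order \<alpha>"
  obtain C0 where C0: "\<forall>x y. x \<noteq> y \<longrightarrow> norm (K x y) \<le> C0 * min (dist x y powr (- real CARD('n)))
                                     (dist x y powr (- real CARD('n) - \<mu>))" using size by blast
  have C0pos: "C0 \<ge> 0"
  proof (rule ccontr)
    assume neg: "\<not> C0 \<ge> 0"
    define y :: "real^'n" where "y = (\<chi> i. 1)"
    have "y \<noteq> 0" unfolding y_def by (metis vec_lambda_beta zero_index zero_neq_one)
    then have "(0::real^'n) \<noteq> y" by auto
    then have h: "norm (K 0 y) \<le> C0 * min (dist 0 y powr (- real CARD('n))) (dist 0 y powr (- real CARD('n) - \<mu>))"
      using C0 by blast
    have "min (dist 0 y powr (- real CARD('n))) (dist 0 y powr (- real CARD('n) - \<mu>)) > 0"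
      using \<open>y \<noteq> 0\<close> by simp
    then have "C0 * min (dist 0 y powr (- real CARD('n))) (dist 0 y powr (- real CARD('n) - \<mu>)) < 0"
      using neg by (simp add: mult_neg_pos)
    with h show False using norm_ge_zero[of "K 0 y"] by linarith
  qed
  have Kb: "norm (K x y) \<le> C0 * dist x y powr (- n - \<mu>)" if "x \<noteq> y" for x y
  proof -
    have "norm (K x y) \<le> C0 * min (dist x y powr (- real CARD('n))) (dist x y powr (- real CARD('n) - \<mu>))"
      using C0 that by blast
    also have "\<dots> \<le> C0 * dist x y powr (- n - \<mu>)"
      by (rule mult_left_mono[OF _ C0pos]) (simp add: n_def)
    finally show ?thesis .
  qed
  have gm: "g \<in> borel_measurable lebesgue" and g2: "integrable lebesgue (\<lambda>x. (norm (g x))^2)"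
    using gL2 by (auto simp: L2_def)
  obtain b where b: "b > 0" "\<forall>x\<in>supp g. norm x \<le> b"
    using compact_imp_bounded[OF gc] bounded_pos by blast
  define R where "R = max 1 b"
  have R1: "R \<ge> 1" by (simp add: R_def)
  have supR: "norm x \<le> R" if "x \<in> supp g" for x
    using b(2) that unfolding R_def by (meson max.coboundedI2 order_trans)
  have gz: "y \<in> supp g" if "g y \<noteq> 0" for y
    using that closure_subset[of "{x. g x \<noteq> 0}"] unfolding supp_def by blast
  have cb: "cball (0::real^'n) r \<in> sets lebesgue" "emeasure lebesgue (cball (0::real^'n) r) < \<infinity>" for r
    using lmeasurable_cball[of "0::real^'n" r] unfolding fmeasurable_def by blast+
  have gint: "integrable lebesgue g"
  proof (rule Bochner_Integration.integrable_bound)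
    show "integrable lebesgue (\<lambda>x. indicator (cball 0 R) x * norm (g x))"
      by (rule L2_local[OF gm g2 cb])
    show "g \<in> borel_measurable lebesgue" by (rule gm)
    show "AE x in lebesgue. norm (g x) \<le> norm (indicator (cball 0 R) x * norm (g x))"
    proof (rule AE_I2)
      fix x show "norm (g x) \<le> norm (indicator (cball 0 R) x * norm (g x))"
      proof (cases "g x = 0")
        case True then show ?thesis by simp
      next
        case False
        then have "x \<in> cball 0 R" using supR[OF gz[OF False]] by simp
        then show ?thesis by simp
      qed
    qed
  qed
  define G where "G = (LINT y|lebesgue. norm (g y))"
  have Gpos: "G \<ge> 0" unfolding G_def by simp
  obtain CT where CT: "\<forall>f\<in>L2. T f \<in> L2 \<and> L2_norm_sq (T f) \<le> CT * L2_norm_sq f" using bounded by blast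
  have Tm: "T g \<in> borel_measurable lebesgue" and T2: "integrable lebesgue (\<lambda>x. (norm (T g x))^2)"
    using CT gL2 by (auto simp: L2_def)
  have Tbound: "AE x in lebesgue. 2 * R \<le> norm x \<longrightarrow> norm (T g x) \<le> C0 * (norm x / 2) powr (- n - \<mu>) * G"
    using K_repr[OF gL2 gc]
  proof (rule AE_mp[OF _ AE_I2], intro impI)
    fix x assume H: "x \<notin> supp g \<longrightarrow> T g x = (LINT y|lebesgue. K x y * g y)" and xR: "2 * R \<le> norm x"
    have xns: "x \<notin> supp g" using supR xR R1 by force
    define B where "B = C0 * (norm x / 2) powr (- n - \<mu>)"
    have Bpos: "B \<ge> 0" unfolding B_def using C0pos by simp
    have pw: "norm (K x y * g y) \<le> B * norm (g y)" for y
    proof (cases "g y = 0")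
      case True then show ?thesis by simp
    next
      case False
      then have yR: "norm y \<le> R" using supR gz by blast
      have "norm x - norm y \<le> norm (x - y)" by (rule norm_triangle_ineq2)
      then have dxy: "norm x / 2 \<le> dist x y" using yR xR by (simp add: dist_norm)
      have nx: "norm x / 2 > 0" using xR R1 by linarith
      then have "x \<noteq> y" using dxy by auto
      then have "norm (K x y) \<le> C0 * dist x y powr (- n - \<mu>)" by (rule Kb)
      also have "\<dots> \<le> B" unfolding B_def
        by (rule mult_left_mono[OF powr_mono2' C0pos]) (use mu_pos nx dxy in \<open>auto simp: n_def\<close>)
      finally show ?thesis by (simp add: norm_mult mult_right_mono)
    qed
    have "norm (LINT y|lebesgue. K x y * g y) \<le> B * G"
    proof (cases "integrable lebesgue (\<lambda>y. K x y * g y)")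
      case True
      have "norm (LINT y|lebesgue. K x y * g y) \<le> (LINT y|lebesgue. norm (K x y * g y))"
        by (rule integral_norm_bound)
      also have "\<dots> \<le> (LINT y|lebesgue. B * norm (g y))"
        by (rule integral_mono) (use True gint pw in auto)
      also have "\<dots> = B * G" by (simp add: G_def)
      finally show ?thesis .
    next
      case False then show ?thesis using Bpos Gpos by (simp add: not_integrable_integral_eq)
    qed
    then show "norm (T g x) \<le> C0 * (norm x / 2) powr (- n - \<mu>) * G"
      using H xns by (simp add: B_def)
  qed
  define s where "s = n + \<mu> - real a"
  have s: "s > real DIM(real^'n)" using ord by (simp add: s_def n_def a_def)
  have tail: "integrable lebesgue (\<lambda>x::real^'n. indicator {x. 2 * R \<le> norm x} x * norm x powr (-s))"
    by (rule tail_integrable[OF s]) (use R1 in simp)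
  have loc: "integrable lebesgue (\<lambda>x. indicator (cball 0 (2 * R)) x * norm (T g x))"
    by (rule L2_local[OF Tm T2 cb])
  define C1 where "C1 = C0 * 2 powr (n + \<mu>) * G"
  have C1pos: "C1 \<ge> 0" unfolding C1_def using C0pos Gpos by simp
  show "integrable lebesgue (\<lambda>x. complex_of_real (monomial x \<alpha>) * T g x)"
  proof (rule Bochner_Integration.integrable_bound)
    show "integrable lebesgue (\<lambda>x. (2 * R)^a * (indicator (cball 0 (2 * R)) x * norm (T g x))
            + C1 * (indicator {x. 2 * R \<le> norm x} x * norm x powr (-s)))"
      by (intro Bochner_Integration.integrable_add integrable_mult_right loc tail)
    show "(\<lambda>x. complex_of_real (monomial x \<alpha>) * T g x) \<in> borel_measurable lebesgue"
      by (rule borel_measurable_times[OF measurable_compose[OF monomial_meas borel_measurable_of_real] Tm])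
    show "AE x in lebesgue. norm (complex_of_real (monomial x \<alpha>) * T g x) \<le>
          norm ((2 * R)^a * (indicator (cball 0 (2 * R)) x * norm (T g x))
            + C1 * (indicator {x. 2 * R \<le> norm x} x * norm x powr (-s)))"
      using Tbound
    proof (rule AE_mp[OF _ AE_I2], intro impI)
      fix x assume hx: "2 * R \<le> norm x \<longrightarrow> norm (T g x) \<le> C0 * (norm x / 2) powr (- n - \<mu>) * G"
      define h1 where "h1 = (2 * R)^a * (indicator (cball 0 (2 * R)) x * norm (T g x))"
      define h2 where "h2 = C1 * (indicator {x. 2 * R \<le> norm x} x * norm x powr (-s))"
      have h1p: "h1 \<ge> 0" unfolding h1_def using R1 by simp
      have h2p: "h2 \<ge> 0" unfolding h2_def using C1pos by simp
      have m: "\<bar>monomial x \<alpha>\<bar> \<le> norm x ^ a" unfolding a_def by (rule monomial_bound)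
      have lhs: "norm (complex_of_real (monomial x \<alpha>) * T g x) = \<bar>monomial x \<alpha>\<bar> * norm (T g x)"
        by (simp add: norm_mult)
      have "\<bar>monomial x \<alpha>\<bar> * norm (T g x) \<le> h1 + h2"
      proof (cases "norm x \<le> 2 * R")
        case True
        have "\<bar>monomial x \<alpha>\<bar> * norm (T g x) \<le> norm x ^ a * norm (T g x)"
          by (rule mult_right_mono[OF m]) simp
        also have "\<dots> \<le> (2 * R) ^ a * norm (T g x)"
          by (rule mult_right_mono[OF power_mono]) (use True in auto)
        also have "\<dots> = h1" using True by (simp add: h1_def)
        finally show ?thesis using h2p by simp
      next
        case False
        then have xR: "2 * R \<le> norm x" by simp
        have nx: "norm x > 0" using xR R1 by linarith
        have "\<bar>monomial x \<alpha>\<bar> * norm (T g x) \<le> norm x ^ a * (C0 * (norm x / 2) powr (- n - \<mu>) * G)"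
          by (rule mult_mono[OF m]) (use hx xR in auto)
        also have "\<dots> = C1 * norm x powr (-s)"
        proof -
          have e1: "norm x ^ a = norm x powr (real a)" using nx by (simp add: powr_realpow)
          have e2: "(norm x / 2) powr (- n - \<mu>) = norm x powr (- n - \<mu>) * 2 powr (n + \<mu>)"
          proof -
            have "(norm x / 2) powr (- n - \<mu>) = norm x powr (- n - \<mu>) / 2 powr (- n - \<mu>)"
              by (rule powr_divide)
            also have "(2::real) powr (- n - \<mu>) = 2 powr (- (n + \<mu>))" by (simp only: minus_add_distrib diff_conv_add_uminus)
            also have "\<dots> = inverse (2 powr (n + \<mu>))" by (rule powr_minus)
            finally show ?thesis by (simp only: divide_inverse inverse_inverse_eq)
          qed
          have e3: "norm x powr (real a) * norm x powr (- n - \<mu>) = norm x powr (-s)"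
            unfolding powr_add[symmetric] by (rule arg_cong[where f="\<lambda>t. norm x powr t"]) (simp add: s_def)
          show ?thesis unfolding e1 e2 C1_def using e3 by (simp add: algebra_simps)
        qed
        also have "\<dots> = h2" using xR by (simp add: h2_def)
        finally show ?thesis using h1p by simp
      qed
      then show "norm (complex_of_real (monomial x \<alpha>) * T g x) \<le>
          norm ((2 * R)^a * (indicator (cball 0 (2 * R)) x * norm (T g x))
            + C1 * (indicator {x. 2 * R \<le> norm x} x * norm x powr (-s)))"
        unfolding lhs h1_def[symmetric] h2_def[symmetric] using h1p h2p by simp
    qed
  qed
qed

end
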